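(* Let $0<\lambda<1$, $0<\beta<1$, and let $\mathcal{A}$ be the (not necessarily unital) associative subalgebra of $\operatorname{End}(\mathcal{B}'(\lambda,\beta))\cong M_4(\mathbb{R})$ generated by the left multiplication operators $l_o,l_a,l_b$. Then: 1. if $\lambda=\beta=\tfrac12$, then $\mathcal{A}=M_0$; 2. if $\lambda\neq\beta$ and $\lambda=1-\beta$, then $\mathcal{A}=M_1$; 3. if $\lambda=\beta$ and $\lambda\neq1-\beta$, then $\mathcal{A}=M_2$; 4. if $\lambda\neq\beta$ and $\lambda\neq1-\beta$, then $\mathcal{A}=M_3$.
   Context: For real parameters $0<\lambda<1$ and $0<\beta<1$, $\mathcal{B}'(\lambda,\beta)$ denotes the commutative (non-associative) $4$-dimensional real algebra with basis $\{o,a,b,c\}$ whose bilinear commutative multiplication $\circ$ is determined by $o\circ o=o$, $o\circ a=\lambda a$, $o\circ b=\lambda b$, $a\circ a=a$, $b\circ b=b$, $a\circ b=\frac{\lambda-\beta}{\lambda}a+\frac{\lambda+\beta-1}{\lambda}b+c$, and $c\circ x=x\circ c=0$ for every $x$. (In the paper the basis vector $c$ is written $ab$.) For $x$ in the algebra, $l_x(y)=x\circ y$; operators are identified with $4\times4$ real matrices with respect to the ordered basis $(o,a,b,c)$, the $j$-th column being the coordinate vector of the image of the $j$-th basis vector. Thus $l_o=E_{11}+\lambda E_{22}+\lambda E_{33}$, $l_a=\lambda E_{21}+E_{22}+\frac{\lambda-\beta}{\lambda}E_{23}+\frac{\lambda+\beta-1}{\lambda}E_{33}+E_{43}$, $l_b=\frac{\lambda-\beta}{\lambda}E_{22}+\lambda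 E_{31}+\frac{\lambda+\beta-1}{\lambda}E_{32}+E_{33}+E_{42}$, where $E_{ij}$ are matrix units. Define the subspaces of $M_4(\mathbb{R})$: $M_0=\operatorname{span}\{E_{11},E_{21},E_{22},E_{31},E_{33},E_{41},E_{42},E_{43}\}$, $M_1=M_0+\mathbb{R}E_{23}$, $M_2=M_0+\mathbb{R}E_{32}$, $M_3=M_0+\mathbb{R}E_{23}+\mathbb{R}E_{32}$. *)

theory Defs
  imports "HOL-Analysis.Analysis" "HOL-Library.Numeral_Type"
begin

text \<open>4x4 real matrices; rows/columns indexed by the type 4, with basis order (o,a,b,c)
  corresponding to indices 1,2,3,4 (note: in type 4 the numeral 4 equals 0; the four
  indices 1,2,3,4 are pairwise distinct and exhaust the type).\<close>

type_synonym mat4 = "real ^ 4 ^ 4"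

definition E :: "4 \<Rightarrow> 4 \<Rightarrow> mat4" where
  "E i j = (\<chi> r c. if r = i \<and> c = j then 1 else 0)"

definition gen_alg :: "mat4 set \<Rightarrow> mat4 set" where
  "gen_alg S = \<Inter>{A. S \<subseteq> A \<and> subspace A \<and> (\<forall>x\<in>A. \<forall>y\<in>A. x ** y \<in> A)}"

definition l_o :: "real \<Rightarrow> real \<Rightarrow> mat4" where
  "l_o lam bet = E 1 1 + lam *\<^sub>R E 2 2 + lam *\<^sub>R E 3 3"

definition l_a :: "real \<Rightarrow> real \<Rightarrow> mat4" where
  "l_a lam bet = lam *\<^sub>R E 2 1 + E 2 2 + ((lam - bet) / lam) *\<^sub>R E 2 3
     + ((lam + bet - 1) / lam) *\<^sub>R E 3 3 + E 4 3"

definition l_b :: "real \<Rightarrow> real \<Rightarrow> mat4" where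
  "l_b lam bet = ((lam - bet) / lam) *\<^sub>R E 2 2 + lam *\<^sub>R E 3 1
     + ((lam + bet - 1) / lam) *\<^sub>R E 3 2 + E 3 3 + E 4 2"

definition M0 :: "mat4 set" where
  "M0 = span {E 1 1, E 2 1, E 2 2, E 3 1, E 3 3, E 4 1, E 4 2, E 4 3}"

definition M1 :: "mat4 set" where
  "M1 = span {E 1 1, E 2 1, E 2 2, E 3 1, E 3 3, E 4 1, E 4 2, E 4 3, E 2 3}"

definition M2 :: "mat4 set" where
  "M2 = span {E 1 1, E 2 1, E 2 2, E 3 1, E 3 3, E 4 1, E 4 2, E 4 3, E 3 2}"

definition M3 :: "mat4 set" where
  "M3 = span {E 1 1, E 2 1, E 2 2, E 3 1, E 3 3, E 4 1, E 4 2, E 4 3, E 2 3, E 3 2}"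

end

theory Submission
  imports Defs
begin

lemma sum_4: "sum f (UNIV::4 set) = f 1 + f 2 + f 3 + f 4"
  unfolding UNIV_4 by (simp add: ac_simps)
lemma E_ent: "E i j $ r $ c = (if r = i \<and> c = j then 1 else 0)" by (simp add: E_def)
lemmas ents = vec_eq_iff forall_4 matrix_matrix_mult_def sum_4 E_ent

lemma scale_mem:
  fixes X Y :: mat4
  assumes "subspace G" "c \<noteq> 0" "c *\<^sub>R X = Y" "Y \<in> G"
  shows "X \<in> G"
proof -
  have "X = (1/c) *\<^sub>R Y" using assms(2,3) by auto
  then show ?thesis using assms(1,4) by (simp add: subspace_scale)
qed

lemma core:
  fixes G :: "mat4 set" and lam p q :: real
  assumes sub: "subspace G" and mul: "\<And>x y. x\<in>G \<Longrightarrow> y\<in>G \<Longrightarrow> x**y\<in>G"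
    and LOd: "LO = E 1 1 + lam *\<^sub>R E 2 2 + lam *\<^sub>R E 3 3" and lo: "LO \<in> G"
    and LAd: "LA = lam *\<^sub>R E 2 1 + E 2 2 + p *\<^sub>R E 2 3 + q *\<^sub>R E 3 3 + E 4 3" and la: "LA \<in> G"
    and LBd: "LB = p *\<^sub>R E 2 2 + lam *\<^sub>R E 3 1 + q *\<^sub>R E 3 2 + E 3 3 + E 4 2" and lb: "LB \<in> G"
    and l0: "lam \<noteq> 0" and l1: "lam \<noteq> 1"
  shows "E 1 1 \<in> G \<and> E 2 1 \<in> G \<and> E 3 1 \<in> G \<and> E 4 1 \<in> G \<and> E 4 2 \<in> G \<and> E 4 3 \<in> G
    \<and> E 2 2 + E 3 3 \<in> G \<and> (1-q) *\<^sub>R E 2 2 + p *\<^sub>R E 2 3 \<in> G \<and> q *\<^sub>R E 3 2 + (1-p) *\<^sub>R E 3 3 \<in> G"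
proof -
  have l1': "1 - lam \<noteq> 0" using l1 by simp
  have e11: "E 1 1 \<in> G"
    by (rule scale_mem[OF sub l1', of _ "LO ** LO - lam *\<^sub>R LO"])
      (simp add: ents LOd algebra_simps, intro subspace_scale subspace_diff mul sub lo)
  have d: "E 2 2 + E 3 3 \<in> G"
    by (rule scale_mem[OF sub l0, of _ "LO - E 1 1"])
      (simp add: ents LOd algebra_simps, intro subspace_scale subspace_diff mul sub lo e11)
  have e21: "E 2 1 \<in> G"
    by (rule scale_mem[OF sub l0, of _ "LA ** E 1 1"])
      (simp add: ents LAd algebra_simps, intro subspace_scale subspace_diff mul sub la e11)
  have e31: "E 3 1 \<in> G"
    by (rule scale_mem[OF sub l0, of _ "LB ** E 1 1"])
      (simp add: ents LBd algebra_simps, intro subspace_scale subspace_diff mul sub lb e11)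
  have e43: "E 4 3 \<in> G"
    by (rule scale_mem[OF sub one_neq_zero, of _ "LA - (E 2 2 + E 3 3) ** LA"])
      (simp add: ents LAd algebra_simps, intro subspace_scale subspace_diff mul sub la d)
  have e42: "E 4 2 \<in> G"
    by (rule scale_mem[OF sub one_neq_zero, of _ "LB - (E 2 2 + E 3 3) ** LB"])
      (simp add: ents LBd algebra_simps, intro subspace_scale subspace_diff mul sub lb d)
  have e41: "E 4 1 \<in> G"
    by (rule scale_mem[OF sub one_neq_zero, of _ "E 4 3 ** E 3 1"])
      (simp add: ents, intro mul e43 e31)
  have u: "(1-q) *\<^sub>R E 2 2 + p *\<^sub>R E 2 3 \<in> G"
    by (rule scale_mem[OF sub one_neq_zero, of _ "(E 2 2 + E 3 3) ** LA ** (E 2 2 + E 3 3) - q *\<^sub>R (E 2 2 + E 3 3)"])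
      (simp add: ents LAd algebra_simps, intro subspace_scale subspace_diff mul sub la d)
  have v: "q *\<^sub>R E 3 2 + (1-p) *\<^sub>R E 3 3 \<in> G"
    by (rule scale_mem[OF sub one_neq_zero, of _ "(E 2 2 + E 3 3) ** LB ** (E 2 2 + E 3 3) - p *\<^sub>R (E 2 2 + E 3 3)"])
      (simp add: ents LBd algebra_simps, intro subspace_scale subspace_diff mul sub lb d)
  show ?thesis using e11 e21 e31 e41 e42 e43 d u v by blast
qed

lemma fin:
  fixes G :: "mat4 set" and a b p q :: real
  assumes sub: "subspace G" and mul: "\<And>x y. x\<in>G \<Longrightarrow> y\<in>G \<Longrightarrow> x**y\<in>G"
    and d: "E 2 2 + E 3 3 \<in> G" and u: "a *\<^sub>R E 2 2 + p *\<^sub>R E 2 3 \<in> G"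
    and v: "q *\<^sub>R E 3 2 + b *\<^sub>R E 3 3 \<in> G" and a0: "a \<noteq> 0" and b0: "b \<noteq> 0"
  shows "(p = 0 \<longrightarrow> E 2 2 \<in> G \<and> E 3 3 \<in> G)
    \<and> (p = 0 \<and> q \<noteq> 0 \<longrightarrow> E 3 2 \<in> G)
    \<and> (q = 0 \<longrightarrow> E 2 2 \<in> G \<and> E 3 3 \<in> G)
    \<and> (q = 0 \<and> p \<noteq> 0 \<longrightarrow> E 2 3 \<in> G)
    \<and> (p \<noteq> 0 \<and> q \<noteq> 0 \<and> a * b - p * q \<noteq> 0 \<longrightarrow> E 2 2 \<in> G \<and> E 3 3 \<in> G \<and> E 2 3 \<in> G \<and> E 3 2 \<in> G)"
proof -
  have A: "E 3 2 \<in> G" if "E 3 3 \<in> G" "q \<noteq> 0"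
    by (rule scale_mem[OF sub \<open>q\<noteq>0\<close>, of _ "(q *\<^sub>R E 3 2 + b *\<^sub>R E 3 3) - b *\<^sub>R E 3 3"])
      (simp, intro subspace_scale subspace_diff sub v that)
  have B: "E 2 3 \<in> G" if "E 2 2 \<in> G" "p \<noteq> 0"
    by (rule scale_mem[OF sub \<open>p\<noteq>0\<close>, of _ "(a *\<^sub>R E 2 2 + p *\<^sub>R E 2 3) - a *\<^sub>R E 2 2"])
      (simp, intro subspace_scale subspace_diff sub u that)
  have C: "E 3 3 \<in> G" if "E 2 2 \<in> G"
    by (rule scale_mem[OF sub one_neq_zero, of _ "(E 2 2 + E 3 3) - E 2 2"])
      (simp, intro subspace_scale subspace_diff sub d that)
  have C': "E 2 2 \<in> G" if "E 3 3 \<in> G"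
    by (rule scale_mem[OF sub one_neq_zero, of _ "(E 2 2 + E 3 3) - E 3 3"])
      (simp, intro subspace_scale subspace_diff sub d that)
  have P: "E 2 2 \<in> G" if "p = 0"
    by (rule scale_mem[OF sub a0, of _ "a *\<^sub>R E 2 2 + p *\<^sub>R E 2 3"]) (simp add: that, rule u)
  have Q: "E 3 3 \<in> G" if "q = 0"
    by (rule scale_mem[OF sub b0, of _ "q *\<^sub>R E 3 2 + b *\<^sub>R E 3 3"]) (simp add: that, rule v)
  have R: "E 2 2 \<in> G" if "a * b - p * q \<noteq> 0"
    by (rule scale_mem[OF sub that, of _ "b *\<^sub>R (a *\<^sub>R E 2 2 + p *\<^sub>R E 2 3) - (a *\<^sub>R E 2 2 + p *\<^sub>R E 2 3) ** (q *\<^sub>R E 3 2 + b *\<^sub>R E 3 3)"])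
      (simp add: ents algebra_simps, intro subspace_scale subspace_diff mul sub u v)
  show ?thesis using A B C C' P Q R by blast
qed

lemma E_mult: "E i j ** E k l = (if j = k then E i l else 0)"
proof -
  have "(\<Sum>m\<in>UNIV. (if r = i \<and> m = j then 1 else 0) * (if m = k \<and> c = l then 1 else (0::real)))
     = (if j = k \<and> r = i \<and> c = l then 1 else 0)" for r c
  proof -
    have "(\<Sum>m\<in>UNIV. (if r = i \<and> m = j then 1 else 0) * (if m = k \<and> c = l then 1 else (0::real)))
      = (\<Sum>m\<in>UNIV. if m = j then (if r = i \<and> j = k \<and> c = l then 1 else 0) else 0)"
      by (rule sum.cong) auto
    also have "\<dots> = (if j = k \<and> r = i \<and> c = l then 1 else 0)" by (simp add: sum.delta)
    finally show ?thesis .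
  qed
  then show ?thesis by (auto simp: vec_eq_iff matrix_matrix_mult_def E_def)
qed

lemma matrix_add_rdistrib: "((A::mat4) + B) ** C = A ** C + B ** C"
  by (simp add: matrix_matrix_mult_def vec_eq_iff sum.distrib distrib_right)

lemma span_mult_closed:
  assumes B: "\<forall>b\<in>B. \<forall>b'\<in>B. b ** b' \<in> span B"
    and x: "(x::mat4) \<in> span B" and y: "y \<in> span B"
  shows "x ** y \<in> span B"
proof -
  have "\<forall>y\<in>span B. x ** y \<in> span B" using x
  proof (induction rule: span_induct)
    case base show ?case unfolding subspace_def
      by (simp add: matrix_add_rdistrib scalar_matrix_assoc[symmetric] span_add span_scale span_zero)
  next
    case (step x)
    show ?case
    proof
      fix y assume "y \<in> span B"
      then show "x ** y \<in> span B"
      proof (induction rule: span_induct)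
        case base show ?case unfolding subspace_def
          by (simp add: matrix_add_ldistrib matrix_scalar_ac scalar_matrix_assoc[symmetric] span_add span_scale span_zero)
      next
        case (step y) then show ?case using B \<open>x\<in>B\<close> by blast
      qed
    qed
  qed
  then show ?thesis using y by blast
qed


lemma gen_props:
  shows "S \<subseteq> gen_alg S" and "subspace (gen_alg S)"
    and "\<And>x y. x \<in> gen_alg S \<Longrightarrow> y \<in> gen_alg S \<Longrightarrow> x ** y \<in> gen_alg S"
    and "\<And>A. S \<subseteq> A \<Longrightarrow> subspace A \<Longrightarrow> (\<forall>x\<in>A. \<forall>y\<in>A. x ** y \<in> A) \<Longrightarrow> gen_alg S \<subseteq> A"
  unfolding gen_alg_def
     apply blast
    apply (rule subspace_Inter) apply blast
   apply blast
  apply blast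
  done

lemma gen_eq_span:
  assumes "B \<subseteq> gen_alg S" "S \<subseteq> span B" "\<forall>b\<in>B. \<forall>b'\<in>B. b ** b' \<in> span B"
  shows "gen_alg S = span B"
proof
  show "gen_alg S \<subseteq> span B"
    using assms(2,3) by (intro gen_props(4)) (auto intro: span_mult_closed)
  show "span B \<subseteq> gen_alg S"
    using assms(1) by (intro span_minimal gen_props(2))
qed

theorem mainTheorem8:
  fixes lam bet :: real
  assumes "0 < lam" "lam < 1" "0 < bet" "bet < 1"
  defines "\<A> \<equiv> gen_alg {l_o lam bet, l_a lam bet, l_b lam bet}"
  shows "(lam = 1/2 \<and> bet = 1/2 \<longrightarrow> \<A> = M0)
       \<and> (lam \<noteq> bet \<and> lam = 1 - bet \<longrightarrow> \<A> = M1)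
       \<and> (lam = bet \<and> lam \<noteq> 1 - bet \<longrightarrow> \<A> = M2)
       \<and> (lam \<noteq> bet \<and> lam \<noteq> 1 - bet \<longrightarrow> \<A> = M3)"
proof -
  define p where "p = (lam - bet) / lam"
  define q where "q = (lam + bet - 1) / lam"
  have sub: "subspace \<A>" unfolding \<A>_def by (rule gen_props(2))
  have mul: "\<And>x y. x\<in>\<A> \<Longrightarrow> y\<in>\<A> \<Longrightarrow> x**y\<in>\<A>" unfolding \<A>_def by (rule gen_props(3))
  have S: "{l_o lam bet, l_a lam bet, l_b lam bet} \<subseteq> \<A>" unfolding \<A>_def by (rule gen_props(1))
  have c: "E 1 1 \<in> \<A> \<and> E 2 1 \<in> \<A> \<and> E 3 1 \<in> \<A> \<and> E 4 1 \<in> \<A> \<and> E 4 2 \<in> \<A> \<and> E 4 3 \<in> \<A>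
    \<and> E 2 2 + E 3 3 \<in> \<A> \<and> (1-q) *\<^sub>R E 2 2 + p *\<^sub>R E 2 3 \<in> \<A> \<and> q *\<^sub>R E 3 2 + (1-p) *\<^sub>R E 3 3 \<in> \<A>"
    by (rule core[OF sub mul, of "l_o lam bet" lam "l_a lam bet" p q "l_b lam bet"])
      (use S assms in \<open>auto simp: l_o_def l_a_def l_b_def p_def q_def\<close>)
  have a0: "1 - q \<noteq> 0" using assms by (simp add: q_def field_simps)
  have b0: "1 - p \<noteq> 0" using assms by (simp add: p_def field_simps)
  have key: "(1 - q) * (1 - p) - p * q \<noteq> 0" using assms by (simp add: p_def q_def field_simps)
  have p0: "p = 0 \<longleftrightarrow> lam = bet" using assms by (simp add: p_def field_simps)
  have q0: "q = 0 \<longleftrightarrow> lam = 1 - bet" using assms by (auto simp: q_def field_simps)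
  have d: "E 2 2 + E 3 3 \<in> \<A>" and u: "(1-q) *\<^sub>R E 2 2 + p *\<^sub>R E 2 3 \<in> \<A>"
    and v: "q *\<^sub>R E 3 2 + (1-p) *\<^sub>R E 3 3 \<in> \<A>" using c by blast+
  note f = fin[OF sub mul d u v a0 b0]
  note all = c f p0 q0 key
  have lo: "l_o lam bet = E 1 1 + lam *\<^sub>R E 2 2 + lam *\<^sub>R E 3 3" by (simp add: l_o_def)
  have la: "l_a lam bet = lam *\<^sub>R E 2 1 + E 2 2 + p *\<^sub>R E 2 3 + q *\<^sub>R E 3 3 + E 4 3"
    by (simp add: l_a_def p_def q_def)
  have lb: "l_b lam bet = p *\<^sub>R E 2 2 + lam *\<^sub>R E 3 1 + q *\<^sub>R E 3 2 + E 3 3 + E 4 2"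
    by (simp add: l_b_def p_def q_def)
  show ?thesis
  proof (intro conjI impI)
    assume h: "lam = 1/2 \<and> bet = 1/2"
    then have "p = 0" "q = 0" using p0 q0 by auto
    have B1: "{E 1 1, E 2 1, E 2 2, E 3 1, E 3 3, E 4 1, E 4 2, E 4 3} \<subseteq> \<A>" using all h \<open>p=0\<close> \<open>q=0\<close> by simp
    have B2: "{l_o lam bet, l_a lam bet, l_b lam bet} \<subseteq> span {E 1 1, E 2 1, E 2 2, E 3 1, E 3 3, E 4 1, E 4 2, E 4 3}"
      using \<open>p=0\<close> \<open>q=0\<close> by (simp add: lo la lb span_base span_zero span_add span_scale)
    have B3: "\<forall>b\<in>{E 1 1, E 2 1, E 2 2, E 3 1, E 3 3, E 4 1, E 4 2, E 4 3}. \<forall>b'\<in>{E 1 1, E 2 1, E 2 2, E 3 1, E 3 3, E 4 1, E 4 2, E 4 3}. b ** b' \<in> span {E 1 1, E 2 1, E 2 2, E 3 1, E 3 3, E 4 1, E 4 2, E 4 3}"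
      by (simp add: E_mult span_base span_zero)
    show "\<A> = M0" using B1 B2 B3 unfolding M0_def \<A>_def by (rule gen_eq_span)
  next
    assume h: "lam \<noteq> bet \<and> lam = 1 - bet"
    then have "p \<noteq> 0" "q = 0" using p0 q0 by auto
    have B1: "{E 1 1, E 2 1, E 2 2, E 3 1, E 3 3, E 4 1, E 4 2, E 4 3, E 2 3} \<subseteq> \<A>" using all h \<open>p\<noteq>0\<close> \<open>q=0\<close> by simp
    have B2: "{l_o lam bet, l_a lam bet, l_b lam bet} \<subseteq> span {E 1 1, E 2 1, E 2 2, E 3 1, E 3 3, E 4 1, E 4 2, E 4 3, E 2 3}"
      using \<open>p\<noteq>0\<close> \<open>q=0\<close> by (simp add: lo la lb span_base span_zero span_add span_scale)
    have B3: "\<forall>b\<in>{E 1 1, E 2 1, E 2 2, E 3 1, E 3 3, E 4 1, E 4 2, E 4 3, E 2 3}. \<forall>b'\<in>{E 1 1, E 2 1, E 2 2, E 3 1, E 3 3, E 4 1, E 4 2, E 4 3, E 2 3}. b ** b' \<in> span {E 1 1, E 2 1, E 2 2, E 3 1, E 3 3, E 4 1, E 4 2, E 4 3, E 2 3}"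
      by (simp add: E_mult span_base span_zero)
    show "\<A> = M1" using B1 B2 B3 unfolding M1_def \<A>_def by (rule gen_eq_span)
  next
    assume h: "lam = bet \<and> lam \<noteq> 1 - bet"
    then have "p = 0" "q \<noteq> 0" using p0 q0 by auto
    have B1: "{E 1 1, E 2 1, E 2 2, E 3 1, E 3 3, E 4 1, E 4 2, E 4 3, E 3 2} \<subseteq> \<A>" using all h \<open>p=0\<close> \<open>q\<noteq>0\<close> by simp
    have B2: "{l_o lam bet, l_a lam bet, l_b lam bet} \<subseteq> span {E 1 1, E 2 1, E 2 2, E 3 1, E 3 3, E 4 1, E 4 2, E 4 3, E 3 2}"
      using \<open>p=0\<close> \<open>q\<noteq>0\<close> by (simp add: lo la lb span_base span_zero span_add span_scale)
    have B3: "\<forall>b\<in>{E 1 1, E 2 1, E 2 2, E 3 1, E 3 3, E 4 1, E 4 2, E 4 3, E 3 2}. \<forall>b'\<in>{E 1 1, E 2 1, E 2 2, E 3 1, E 3 3, E 4 1, E 4 2, E 4 3, E 3 2}. b ** b' \<in> span {E 1 1, E 2 1, E 2 2, E 3 1, E 3 3, E 4 1, E 4 2, E 4 3, E 3 2}"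
      by (simp add: E_mult span_base span_zero)
    show "\<A> = M2" using B1 B2 B3 unfolding M2_def \<A>_def by (rule gen_eq_span)
  next
    assume h: "lam \<noteq> bet \<and> lam \<noteq> 1 - bet"
    then have "p \<noteq> 0" "q \<noteq> 0" using p0 q0 by auto
    have B1: "{E 1 1, E 2 1, E 2 2, E 3 1, E 3 3, E 4 1, E 4 2, E 4 3, E 2 3, E 3 2} \<subseteq> \<A>" using all h \<open>p\<noteq>0\<close> \<open>q\<noteq>0\<close> by simp
    have B2: "{l_o lam bet, l_a lam bet, l_b lam bet} \<subseteq> span {E 1 1, E 2 1, E 2 2, E 3 1, E 3 3, E 4 1, E 4 2, E 4 3, E 2 3, E 3 2}"
      using \<open>p\<noteq>0\<close> \<open>q\<noteq>0\<close> by (simp add: lo la lb span_base span_zero span_add span_scale)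
    have B3: "\<forall>b\<in>{E 1 1, E 2 1, E 2 2, E 3 1, E 3 3, E 4 1, E 4 2, E 4 3, E 2 3, E 3 2}. \<forall>b'\<in>{E 1 1, E 2 1, E 2 2, E 3 1, E 3 3, E 4 1, E 4 2, E 4 3, E 2 3, E 3 2}. b ** b' \<in> span {E 1 1, E 2 1, E 2 2, E 3 1, E 3 3, E 4 1, E 4 2, E 4 3, E 2 3, E 3 2}"
      by (simp add: E_mult span_base span_zero)
    show "\<A> = M3" using B1 B2 B3 unfolding M3_def \<A>_def by (rule gen_eq_span)
  qed
qed

end
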